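(* Assume the setting of the context and put $\widehat{x}_-=\frac{C_1\epsilon}{2}$, $\widehat{x}_c=\frac{C_1\epsilon}{2}(e^{-2C_0}+1)$, $\widehat{x}_+=\frac{2e^{2C_0}}{C_1\epsilon}$. Then for all sufficiently small $\epsilon>0$ and every $\sigma\in\Sigma$ (writing $Q=Q^\epsilon_\sigma$, $D=D_{\kappa_\sigma}$): (i) if $x\in[0,\infty)$ then $Q\cdot(D\cdot x)\notin[0,\widehat{x}_-)$; (ii) if $x\in[\widehat{x}_-,\infty)$ then $Q\cdot(D\cdot x)\notin[0,\widehat{x}_c)$; (iii) if $Q\cdot(D\cdot x)\in[0,\infty)$ then $x\notin[\widehat{x}_+,\infty)$.
   Context: Let $(\Sigma,\mathbf{p})$ be a probability space. For each $\sigma\in\Sigma$ and $\epsilon\in[-1,1]$ let real numbers $a_\sigma,b_\sigma$, $\kappa_\sigma>0$ and $\alpha^\epsilon_\sigma,\beta^\epsilon_\sigma,\gamma^\epsilon_\sigma,\delta^\epsilon_\sigma$ be given, with $A^\epsilon_\sigma=\begin{pmatrix}\alpha^\epsilon_\sigma&\beta^\epsilon_\sigma\\ \gamma^\epsilon_\sigma&\delta^\epsilon_\sigma\end{pmatrix}$. Assume that for all $\sigma$: $|\log(\kappa_\sigma)|\le C_0$, $a_\sigma-|b_\sigma|\ge C_1$, $a_\sigma+|b_\sigma|\le C_2$, and $\|A^\epsilon_\sigma\|\le C_3$ for $|\epsilon|\le1$, with constants $C_0,C_1,C_2,C_3\in(0,\infty)$. On $\mathbb{R}\cup\{\infty\}$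 define $D_{\kappa}\cdot x=\kappa^2x$ and $$Q^\epsilon_\sigma\cdot x=\frac{(1+\epsilon^2\alpha^\epsilon_\sigma)x+(a_\sigma-b_\sigma-\epsilon\beta^\epsilon_\sigma)\epsilon}{1+\epsilon^2\delta^\epsilon_\sigma-(a_\sigma+b_\sigma+\epsilon\gamma^\epsilon_\sigma)\epsilon x}$$ (Möbius actions with the usual conventions at $\infty$). *)

theory Defs
  imports Complex_Main
begin

text \<open>The projective real line \<open>\<real> \<union> {\<infinity>}\<close>.\<close>
datatype ereal_proj = Fin real | Infty

fun moebius :: "real \<Rightarrow> real \<Rightarrow> real \<Rightarrow> real \<Rightarrow> ereal_proj \<Rightarrow> ereal_proj" where
  "moebius p q r s (Fin x) =
     (if r * x + s = 0 then Infty else Fin ((p * x + q) / (r * x + s)))"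
| "moebius p q r s Infty = (if r = 0 then Infty else Fin (p / r))"

definition Dact :: "real \<Rightarrow> ereal_proj \<Rightarrow> ereal_proj" where
  "Dact \<kappa> x = moebius (\<kappa>^2) 0 0 1 x"

definition Qact :: "real \<Rightarrow> real \<Rightarrow> real \<Rightarrow> real \<Rightarrow> real \<Rightarrow> real \<Rightarrow> real \<Rightarrow> ereal_proj \<Rightarrow> ereal_proj" where
  "Qact a b \<alpha> \<beta> \<gamma> \<delta> \<epsilon> x =
     moebius (1 + \<epsilon>^2 * \<alpha>) ((a - b - \<epsilon> * \<beta>) * \<epsilon>)
             (- ((a + b + \<epsilon> * \<gamma>) * \<epsilon>)) (1 + \<epsilon>^2 * \<delta>) x"

definition in_Ico :: "real \<Rightarrow> real \<Rightarrow> ereal_proj \<Rightarrow> bool" where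
  "in_Ico lo hi x = (\<exists>t. x = Fin t \<and> lo \<le> t \<and> t < hi)"

definition in_Ici :: "real \<Rightarrow> ereal_proj \<Rightarrow> bool" where
  "in_Ici lo x = (\<exists>t. x = Fin t \<and> lo \<le> t)"

definition mat2_norm :: "real \<Rightarrow> real \<Rightarrow> real \<Rightarrow> real \<Rightarrow> real" where
  "mat2_norm p q r s = sqrt (p^2 + q^2 + r^2 + s^2)"

end

theory Submission
  imports Defs
begin

lemma core_i:
  fixes p q r s e C1 C3 u :: real
  assumes "e>0" "C1>0" "C3>0" "e*C3 \<le> C1/8" "e*e*C3 \<le> 1/4"
   "p \<ge> 1 - e*e*C3" "s \<le> 1 + e*e*C3" "q \<ge> C1*e - e*e*C3" "r \<le> -(C1*e) + e*e*C3"
   "u \<ge> 0" "r*u+s \<noteq> 0" "0 \<le> (p*u+q)/(r*u+s)"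
  shows "(p*u+q)/(r*u+s) \<ge> C1*e/2"
proof -
  have pu: "p*u \<ge> 0" using assms by (intro mult_nonneg_nonneg) auto
  have q1: "C1*e - e*e*C3 \<ge> C1*e/2 * (1 + e*e*C3)"
  proof -
    define h where "h = e*e*C3"
    have f2: "h * (C1 * e) \<le> (1/4) * (C1 * e)" using assms unfolding h_def
      by (intro mult_right_mono) auto
    have f3: "h \<le> (C1 * e)/8" using assms unfolding h_def
      by (simp add: mult.assoc mult_left_mono mult.commute)
    have R: "C1*e/2 * (1 + h) = (C1*e)/2 + h * (C1 * e)/2" by (simp add: algebra_simps)
    have "C1*e - h \<ge> C1*e/2 * (1 + h)" unfolding R using f2 f3 \<open>C1>0\<close> \<open>e>0\<close> mult_pos_pos[of C1 e] by linarith
    thus ?thesis unfolding h_def .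
  qed
  have "e*e*C3 > 0" using assms by simp
  hence "1 + e*e*C3 > 0" by linarith
  hence pos1: "C1*e/2 * (1 + e*e*C3) > 0" using assms by simp
  have num: "p*u+q > 0" using pu q1 pos1 assms(8) by linarith
  have den: "r*u+s > 0" using num assms(11,12) by (auto simp: zero_le_divide_iff)
  have ee: "e*e*C3 \<le> (C1*e)/8" using assms
    by (simp add: mult.assoc mult_left_mono mult.commute)
  have "C1*e > 0" using assms by simp
  hence "r < 0" using ee assms(9) by linarith
  hence ru: "r*u \<le> 0" using assms(10) by (simp add: mult_nonpos_nonneg)
  have "C1*e/2 * (r*u+s) \<le> C1*e/2 * (1 + e*e*C3)" using assms ru by (intro mult_left_mono) auto
  hence "C1*e/2 * (r*u+s) \<le> p*u+q" using q1 pu assms by linarith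
  thus ?thesis using den by (simp add: pos_le_divide_eq)
qed

lemma core_ii:
  fixes p q r s e C1 C3 u E :: real
  assumes "e>0" "C1>0" "C3>0" "e*C3 \<le> C1/8" "e*e*C3 \<le> 1/4"
   "p \<ge> 1 - e*e*C3" "s \<le> 1 + e*e*C3" "q \<ge> C1*e - e*e*C3" "r \<le> -(C1*e) + e*e*C3"
   "E > 0" "E \<le> 1" "u \<ge> E * (C1 * e / 2)" "r*u+s \<noteq> 0" "0 \<le> (p*u+q)/(r*u+s)"
  shows "(p*u+q)/(r*u+s) \<ge> C1*e/2 * (E + 1)"
proof -
  have "E*(C1*e/2) > 0" using assms by simp
  hence u0: "u \<ge> 0" using assms by linarith
  have pu: "p*u \<ge> (1 - e*e*C3) * (E * (C1 * e / 2))"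
    using assms u0 by (intro mult_mono) auto
  have ee: "e*e*C3 \<le> e*(C1/8)" using assms by (simp add: mult.assoc mult_left_mono)
  have A: "(1 - e*e*C3) * (E * (C1 * e / 2)) + (C1*e - e*e*C3) \<ge> (1 + e*e*C3) * (C1*e/2 * (E + 1))"
  proof -
    define h where "h = e*e*C3"
    have f1: "h * E * (C1 * e) \<le> h * (C1 * e)" using assms unfolding h_def
      by (intro mult_right_mono mult_left_mono) auto
    have f2: "h * (C1 * e) \<le> (1/4) * (C1 * e)" using assms unfolding h_def
      by (intro mult_right_mono) auto
    have f3: "h \<le> (C1 * e)/8" using ee unfolding h_def by (simp add: mult.commute)
    have L: "(1 - h) * (E * (C1 * e / 2)) + (C1*e - h) = E * (C1 * e)/2 - h * E * (C1 * e)/2 + (C1*e) - h"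
      by (simp add: field_simps)
    have R: "(1 + h) * (C1*e/2 * (E + 1)) = E * (C1 * e)/2 + (C1*e)/2 + h * E * (C1 * e)/2 + h * (C1 * e)/2"
      by (simp add: field_simps)
    have "(1 - h) * (E * (C1 * e / 2)) + (C1*e - h) \<ge> (1 + h) * (C1*e/2 * (E + 1))"
      unfolding L R using f1 f2 f3 \<open>C1>0\<close> \<open>e>0\<close> mult_pos_pos[of C1 e] by linarith
    thus ?thesis unfolding h_def .
  qed
  have "e*e*C3 > 0" using assms by simp
  hence "1 + e*e*C3 > 0" by linarith
  moreover have "C1*e/2 * (E + 1) > 0" using assms by (simp add: add_pos_pos)
  ultimately have pos1: "(1 + e*e*C3) * (C1*e/2 * (E + 1)) > 0" by simp
  have num: "p*u+q > 0" using pu A pos1 assms(8) by linarith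
  have den: "r*u+s > 0" using num assms(13,14) by (auto simp: zero_le_divide_iff)
  have "C1*e > 0" using assms by simp
  moreover have "e*(C1/8) = (C1*e)/8" by simp
  ultimately have "r < 0" using ee assms(9) by linarith
  hence ru: "r*u \<le> 0" using u0 by (simp add: mult_nonpos_nonneg)
  have "C1*e/2*(E+1) * (r*u+s) \<le> C1*e/2*(E+1) * (1 + e*e*C3)" using assms ru by (intro mult_left_mono) auto
  moreover have "C1*e/2*(E+1) * (1 + e*e*C3) = (1 + e*e*C3) * (C1*e/2 * (E + 1))" by simp
  ultimately have "C1*e/2*(E+1) * (r*u+s) \<le> p*u+q" using A pu assms(8) by linarith
  thus ?thesis using den by (simp add: pos_le_divide_eq)
qed

lemma core_iii:
  fixes p q r s e C1 C3 u :: real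
  assumes "e>0" "C1>0" "C3>0" "e*C3 \<le> C1/8" "e*e*C3 \<le> 1/4"
   "p \<ge> 1 - e*e*C3" "s \<le> 1 + e*e*C3" "q \<ge> C1*e - e*e*C3" "r \<le> -(C1*e) + e*e*C3"
   "u \<ge> 2/(C1*e)" "r*u+s \<noteq> 0" "0 \<le> (p*u+q)/(r*u+s)"
  shows False
proof -
  have ce: "C1*e > 0" using assms by simp
  have "2/(C1*e) > 0" using ce by simp
  hence u0: "u > 0" using assms by linarith
  have ee: "e*e*C3 \<le> (C1*e)/8" using assms
    by (simp add: mult.assoc mult_left_mono mult.commute)
  have c: "C1*e - e*e*C3 \<ge> (7/8)*C1*e" using ee ce by linarith
  have "r*u \<le> (-(C1*e) + e*e*C3) * u" using assms u0 by (intro mult_right_mono) auto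
  also have "\<dots> \<le> -((7/8)*C1*e) * u" using c u0 by (intro mult_right_mono) auto
  also have "\<dots> \<le> -((7/8)*C1*e) * (2/(C1*e))" using assms u0
    by (intro mult_left_mono_neg) auto
  also have "\<dots> = -7/4" using assms by simp
  finally have den: "r*u+s < 0" using assms by linarith
  have pu: "p*u > 0" using assms u0 by (intro mult_pos_pos) auto
  have "q > 0" using c assms ce by linarith
  hence "(p*u+q)/(r*u+s) < 0" using pu den by (simp add: divide_pos_neg)
  thus False using assms by linarith
qed

theorem lemma2:
  fixes Sig :: "'s set"
    and a b \<kappa> :: "'s \<Rightarrow> real"
    and \<alpha> \<beta> \<gamma> \<delta> :: "'s \<Rightarrow> real \<Rightarrow> real"
    and C0 C1 C2 C3 :: real
  assumes "C0 > 0" "C1 > 0" "C2 > 0" "C3 > 0"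
    and "\<forall>\<sigma>\<in>Sig. \<kappa> \<sigma> > 0"
    and "\<forall>\<sigma>\<in>Sig. \<bar>ln (\<kappa> \<sigma>)\<bar> \<le> C0"
    and "\<forall>\<sigma>\<in>Sig. a \<sigma> - \<bar>b \<sigma>\<bar> \<ge> C1"
    and "\<forall>\<sigma>\<in>Sig. a \<sigma> + \<bar>b \<sigma>\<bar> \<le> C2"
    and "\<forall>\<sigma>\<in>Sig. \<forall>\<epsilon>. \<bar>\<epsilon>\<bar> \<le> 1 \<longrightarrow>
           mat2_norm (\<alpha> \<sigma> \<epsilon>) (\<beta> \<sigma> \<epsilon>) (\<gamma> \<sigma> \<epsilon>) (\<delta> \<sigma> \<epsilon>) \<le> C3"
  shows "\<exists>\<epsilon>0>0. \<forall>\<epsilon>. 0 < \<epsilon> \<and> \<epsilon> < \<epsilon>0 \<longrightarrow> (\<forall>\<sigma>\<in>Sig. \<forall>x.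
     (let Q = Qact (a \<sigma>) (b \<sigma>) (\<alpha> \<sigma> \<epsilon>) (\<beta> \<sigma> \<epsilon>) (\<gamma> \<sigma> \<epsilon>) (\<delta> \<sigma> \<epsilon>) \<epsilon>;
          D = Dact (\<kappa> \<sigma>);
          xm = C1 * \<epsilon> / 2;
          xc = C1 * \<epsilon> / 2 * (exp (- 2 * C0) + 1);
          xp = 2 * exp (2 * C0) / (C1 * \<epsilon>)
      in (in_Ici 0 x \<longrightarrow> \<not> in_Ico 0 xm (Q (D x)))
       \<and> (in_Ici xm x \<longrightarrow> \<not> in_Ico 0 xc (Q (D x)))
       \<and> (in_Ici 0 (Q (D x)) \<longrightarrow> \<not> in_Ici xp x)))"
proof -
  define e0 where "e0 = min 1 (min (C1/(8*C3)) (1/(4*C3)))"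
  have e0pos: "e0 > 0" unfolding e0_def using assms(2,4) by simp
  show ?thesis
  proof (intro exI[of _ e0] conjI allI impI ballI e0pos)
    fix e \<sigma> x
    assume he: "0 < e \<and> e < e0" and hs: "\<sigma> \<in> Sig"
    have e: "e > 0" "e \<le> 1" "e < C1/(8*C3)" "e < 1/(4*C3)" using he unfolding e0_def by auto
    have eC3: "e*C3 \<le> C1/8" using e(3) assms(4) by (simp add: pos_less_divide_eq field_simps)
    have eC3': "e*C3 \<le> 1/4" using e(4) assms(4) by (simp add: pos_less_divide_eq field_simps)
    have eeC3: "e*e*C3 \<le> 1/4"
    proof -
      have "e*(e*C3) \<le> 1*(1/4)" using e eC3' assms(4) by (intro mult_mono) auto
      thus ?thesis by (simp add: mult.assoc)
    qed
    define A where "A = \<alpha> \<sigma> e"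
    define B where "B = \<beta> \<sigma> e"
    define G where "G = \<gamma> \<sigma> e"
    define Dl where "Dl = \<delta> \<sigma> e"
    have nrm: "sqrt (A^2 + B^2 + G^2 + Dl^2) \<le> C3"
      using assms(9) hs e unfolding A_def B_def G_def Dl_def mat2_norm_def by auto
    have bA: "\<bar>A\<bar> \<le> C3"
    proof -
      have "\<bar>A\<bar> = sqrt (A^2)" by simp
      also have "\<dots> \<le> sqrt (A^2 + B^2 + G^2 + Dl^2)" by (intro real_sqrt_le_mono) auto
      finally show ?thesis using nrm by linarith
    qed
    have bB: "\<bar>B\<bar> \<le> C3"
    proof -
      have "\<bar>B\<bar> = sqrt (B^2)" by simp
      also have "\<dots> \<le> sqrt (A^2 + B^2 + G^2 + Dl^2)" by (intro real_sqrt_le_mono) auto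
      finally show ?thesis using nrm by linarith
    qed
    have bG: "\<bar>G\<bar> \<le> C3"
    proof -
      have "\<bar>G\<bar> = sqrt (G^2)" by simp
      also have "\<dots> \<le> sqrt (A^2 + B^2 + G^2 + Dl^2)" by (intro real_sqrt_le_mono) auto
      finally show ?thesis using nrm by linarith
    qed
    have bD: "\<bar>Dl\<bar> \<le> C3"
    proof -
      have "\<bar>Dl\<bar> = sqrt (Dl^2)" by simp
      also have "\<dots> \<le> sqrt (A^2 + B^2 + G^2 + Dl^2)" by (intro real_sqrt_le_mono) auto
      finally show ?thesis using nrm by linarith
    qed
    define p where "p = 1 + e^2 * A"
    define q where "q = (a \<sigma> - b \<sigma> - e * B) * e"
    define r where "r = - ((a \<sigma> + b \<sigma> + e * G) * e)"
    define s where "s = 1 + e^2 * Dl"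
    have ee: "e^2 = e*e" by (simp add: power2_eq_square)
    have hp: "p \<ge> 1 - e*e*C3"
    proof -
      have "e*e*(-C3) \<le> e*e*A" using bA e by (intro mult_left_mono) auto
      thus ?thesis unfolding p_def ee by simp
    qed
    have hs': "s \<le> 1 + e*e*C3"
    proof -
      have "e*e*Dl \<le> e*e*C3" using bD e by (intro mult_left_mono) auto
      thus ?thesis unfolding s_def ee by simp
    qed
    have ab1: "a \<sigma> - b \<sigma> \<ge> C1" "a \<sigma> + b \<sigma> \<ge> C1" using assms(7) hs by force+
    have hq: "q \<ge> C1*e - e*e*C3"
    proof -
      have "e*B \<le> e*C3" using bB e by (intro mult_left_mono) auto
      hence "a \<sigma> - b \<sigma> - e*B \<ge> C1 - e*C3" using ab1 by linarith
      hence "(a \<sigma> - b \<sigma> - e*B)*e \<ge> (C1 - e*C3)*e" using e by (intro mult_right_mono) auto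
      thus ?thesis unfolding q_def by (simp add: algebra_simps)
    qed
    have hr: "r \<le> -(C1*e) + e*e*C3"
    proof -
      have "e*(-C3) \<le> e*G" using bG e by (intro mult_left_mono) auto
      hence "a \<sigma> + b \<sigma> + e*G \<ge> C1 - e*C3" using ab1 by linarith
      hence "(a \<sigma> + b \<sigma> + e*G)*e \<ge> (C1 - e*C3)*e" using e by (intro mult_right_mono) auto
      thus ?thesis unfolding r_def by (simp add: algebra_simps)
    qed
    note H = e(1) assms(2) assms(4) eC3 eeC3 hp hs' hq hr
    have rneg: "r < 0"
    proof -
      have "e*e*C3 \<le> (C1*e)/8" using e eC3 by (simp add: mult.assoc mult_left_mono mult.commute)
      moreover have "C1*e > 0" using e assms(2) by simp
      ultimately show ?thesis using hr by linarith
    qed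
    have ppos: "p > 0" using hp eeC3 by linarith
    define k where "k = \<kappa> \<sigma>"
    have kpos: "k > 0" using assms(5) hs unfolding k_def by auto
    have lk: "ln k \<ge> - C0" using assms(6) hs unfolding k_def by force
    have k2: "k^2 \<ge> exp (-2*C0)"
    proof -
      have "exp (real 2 * ln k) = exp (ln k)^2" by (rule exp_of_nat_mult)
      hence "k^2 = exp (2 * ln k)" using kpos by simp
      thus ?thesis using lk by simp
    qed
    have E1: "exp (-2*C0) \<le> 1" "exp (-2*C0) > 0" using assms(1) by auto
    have Qeq: "Qact (a \<sigma>) (b \<sigma>) (\<alpha> \<sigma> e) (\<beta> \<sigma> e) (\<gamma> \<sigma> e) (\<delta> \<sigma> e) e = moebius p q r s"
      unfolding Qact_def p_def q_def r_def s_def A_def B_def G_def Dl_def by (rule ext) simp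
    have Deq: "Dact (\<kappa> \<sigma>) = moebius (k^2) 0 0 1" unfolding Dact_def k_def ..
    show "let Q = Qact (a \<sigma>) (b \<sigma>) (\<alpha> \<sigma> e) (\<beta> \<sigma> e) (\<gamma> \<sigma> e) (\<delta> \<sigma> e) e;
          D = Dact (\<kappa> \<sigma>);
          xm = C1 * e / 2;
          xc = C1 * e / 2 * (exp (- 2 * C0) + 1);
          xp = 2 * exp (2 * C0) / (C1 * e)
      in (in_Ici 0 x \<longrightarrow> \<not> in_Ico 0 xm (Q (D x)))
       \<and> (in_Ici xm x \<longrightarrow> \<not> in_Ico 0 xc (Q (D x)))
       \<and> (in_Ici 0 (Q (D x)) \<longrightarrow> \<not> in_Ici xp x)"
    proof (cases x)
      case Infty
      have "p / r < 0" using ppos rneg by (simp add: divide_pos_neg)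
      then show ?thesis unfolding Let_def Qeq Deq using Infty rneg by (auto simp: in_Ici_def)
    next
      case (Fin t)
      define u where "u = k^2 * t"
      have Dx: "moebius (k^2) 0 0 1 x = Fin u" unfolding Fin u_def by simp
      show ?thesis unfolding Let_def Qeq Deq Dx
      proof (intro conjI impI notI)
        assume "in_Ici 0 x" "in_Ico 0 (C1 * e / 2) (moebius p q r s (Fin u))"
        then have t0: "t \<ge> 0" and d: "r*u+s \<noteq> 0" and v: "0 \<le> (p*u+q)/(r*u+s)" "(p*u+q)/(r*u+s) < C1*e/2"
          using Fin by (auto simp: in_Ici_def in_Ico_def split: if_splits)
        have "u \<ge> 0" unfolding u_def using t0 by simp
        from core_i[OF H this d v(1)] v(2) show False by linarith
      next
        assume "in_Ici (C1 * e / 2) x" "in_Ico 0 (C1 * e / 2 * (exp (- 2 * C0) + 1)) (moebius p q r s (Fin u))"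
        then have t0: "t \<ge> C1 * e / 2" and d: "r*u+s \<noteq> 0" and v: "0 \<le> (p*u+q)/(r*u+s)" "(p*u+q)/(r*u+s) < C1 * e / 2 * (exp (- 2 * C0) + 1)"
          using Fin by (auto simp: in_Ici_def in_Ico_def split: if_splits)
        have "C1*e/2 > 0" using e assms(2) by simp
        hence "exp (-2*C0) * (C1*e/2) \<le> k^2 * t" using k2 t0 E1 by (intro mult_mono) auto
        hence "u \<ge> exp (-2*C0) * (C1*e/2)" unfolding u_def .
        from core_ii[OF H E1(2) E1(1) this d v(1)] v(2) show False by linarith
      next
        assume "in_Ici 0 (moebius p q r s (Fin u))" "in_Ici (2 * exp (2 * C0) / (C1 * e)) x"
        then have t0: "t \<ge> 2 * exp (2 * C0) / (C1 * e)" and d: "r*u+s \<noteq> 0" and v: "0 \<le> (p*u+q)/(r*u+s)"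
          using Fin by (auto simp: in_Ici_def in_Ico_def split: if_splits)
        have "2 * exp (2 * C0) / (C1 * e) > 0" using e assms(2) by simp
        hence "exp (-2*C0) * (2 * exp (2 * C0) / (C1 * e)) \<le> k^2 * t" using k2 t0 E1 by (intro mult_mono) auto
        moreover have "exp (-2*C0) * exp (2 * C0) = 1" by (simp add: exp_add[symmetric])
        hence "exp (-2*C0) * (2 * exp (2 * C0) / (C1 * e)) = 2 / (C1*e)"
          by (metis (no_types, lifting) mult.left_commute times_divide_eq_right mult.right_neutral)
        ultimately have "u \<ge> 2/(C1*e)" unfolding u_def by linarith
        from core_iii[OF H this d v] show False .
      qed
    qed
  qed
qed

end
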